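(* For transformation graphs $G_1,G_2$ such that $G_1$, $G_2$ and $G_1\odot G_2$ have no cycle of negative weight, $G_1\cdot G_2=|G_1|\cdot|G_2|$. In particular, the operation $\cdot$ is associative (on graphs for which all the involved compositions have no negative cycles).
   Context: Fix a finite set of clocks $X=\{x_0,\dots,x_m\}$. A weight is a pair $(\preccurlyeq,d)$ with $\preccurlyeq\in\{<,\le\}$, $d\in\mathbb{Z}$; weights are added by $(\preccurlyeq_1,d_1)+(\preccurlyeq_2,d_2)=(\preccurlyeq,d_1+d_2)$, $\preccurlyeq$ being $<$ iff one of $\preccurlyeq_1,\preccurlyeq_2$ is $<$, and totally ordered by $(\preccurlyeq,d)<(\preccurlyeq',d')$ iff $d<d'$, or $d=d'$, $\preccurlyeq$ is $<$ and $\preccurlyeq'$ is $\le$. A weight is negative if it is smaller than $(\le,0)$; the weight of a path is the sum of its edge weights. A transformation graph with $k+1$ columns is a directed graph with vertex set $\{0,\dots,k\}\times X$ whose edges carry weights; vertex $(j,x)$ lies in column $j$. Composition: if $G_1$ has $k_1$ columns and $G_2$ has $k_2$ columns, $G_1\odot G_2$ is the transformation graph with vertex set $\{0,\dots,k_1+k_2-1\}\times X$ whose edges are: the edges of $G_1$; the edges of $G_2$ shifted by $k_1$ columns; and, for every $x\in X$, edges $(k_1-1,x)\to(k_1,x)$ and $(k_1,x)\to(k_1-1,x)$ of weight $(\le,0)$. The canonical form of a transformation graph $G$ without negative cycles is the graph on the same vertices having, for every pair of distinct vertices $u,w$ such that $G$ has a path from $u$ to $w$, an edge $u\to w$ whose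 weight is the minimal weight of a path from $u$ to $w$ in $G$. The short transformation graph $|G|$ of a graph $G$ with $k+1$ columns and no negative cycle is obtained by putting $G$ in canonical form and restricting it to columns $0$ and $k$, renumbered as columns $0$ and $1$. Define $G_1\cdot G_2=|G_1\odot G_2|$. *)

theory Defs
  imports Main
begin

datatype strictness = Lt | Le

type_synonym weight = "strictness \<times> int"

fun wadd :: "weight \<Rightarrow> weight \<Rightarrow> weight" where
  "wadd (s1, d1) (s2, d2) = ((if s1 = Lt \<or> s2 = Lt then Lt else Le), d1 + d2)"

fun wless :: "weight \<Rightarrow> weight \<Rightarrow> bool" where
  "wless (s, d) (s', d') = (d < d' \<or> (d = d' \<and> s = Lt \<and> s' = Le))"

definition wle :: "weight \<Rightarrow> weight \<Rightarrow> bool" where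
  "wle a b \<longleftrightarrow> wless a b \<or> a = b"

definition wneg :: "weight \<Rightarrow> bool" where
  "wneg w \<longleftrightarrow> wless w (Le, 0)"

text \<open>A vertex is a pair (column, clock); clocks form a finite type 'c.
  A transformation graph is a pair (number of columns, edge function);
  the edge function gives the weight of the edge u \<rightarrow> w, or None if absent.\<close>

type_synonym 'c vertex = "nat \<times> 'c"
type_synonym 'c edges = "'c vertex \<Rightarrow> 'c vertex \<Rightarrow> weight option"
type_synonym 'c tgraph = "nat \<times> 'c edges"

definition ncols :: "'c tgraph \<Rightarrow> nat" where
  "ncols G = fst G"

definition edg :: "'c tgraph \<Rightarrow> 'c edges" where
  "edg G = snd G"

text \<open>Well-formed transformation graph with k+1 columns, k \<ge> 1: all edges
  lie between vertices in columns 0..k.\<close>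
definition tgraph :: "('c::finite) tgraph \<Rightarrow> bool" where
  "tgraph G \<longleftrightarrow> 2 \<le> ncols G \<and>
     (\<forall>u v. edg G u v \<noteq> None \<longrightarrow> fst u < ncols G \<and> fst v < ncols G)"

fun pw :: "'c edges \<Rightarrow> 'c vertex list \<Rightarrow> weight option" where
  "pw E [] = None"
| "pw E [v] = Some (Le, 0)"
| "pw E (u # v # rest) =
     (case E u v of None \<Rightarrow> None | Some a \<Rightarrow> map_option (wadd a) (pw E (v # rest)))"

definition is_path :: "'c tgraph \<Rightarrow> 'c vertex \<Rightarrow> 'c vertex \<Rightarrow> weight \<Rightarrow> bool" where
  "is_path G u w d \<longleftrightarrow> (\<exists>vs. 2 \<le> length vs \<and> hd vs = u \<and> last vs = w \<and> pw (edg G) vs = Some d)"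

definition no_neg_cycle :: "'c tgraph \<Rightarrow> bool" where
  "no_neg_cycle G \<longleftrightarrow> (\<forall>u d. is_path G u u d \<longrightarrow> \<not> wneg d)"

definition min_path_weight :: "'c tgraph \<Rightarrow> 'c vertex \<Rightarrow> 'c vertex \<Rightarrow> weight" where
  "min_path_weight G u w = (THE d. is_path G u w d \<and> (\<forall>d'. is_path G u w d' \<longrightarrow> wle d d'))"

definition canon :: "'c tgraph \<Rightarrow> 'c tgraph" where
  "canon G = (ncols G, \<lambda>u w. if u \<noteq> w \<and> (\<exists>d. is_path G u w d)
                              then Some (min_path_weight G u w) else None)"

text \<open>Short transformation graph: canonical form restricted to columns 0 and k,
  renumbered 0 and 1.\<close>
definition short :: "'c tgraph \<Rightarrow> 'c tgraph" where
  "short G = (2, \<lambda>u w.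
     (let r = (\<lambda>(j, x). (if j = 0 then 0 else ncols G - 1, x)) in
      if fst u \<le> 1 \<and> fst w \<le> 1 then edg (canon G) (r u) (r w) else None))"

definition comp :: "'c tgraph \<Rightarrow> 'c tgraph \<Rightarrow> 'c tgraph" (infixl "\<odot>" 70) where
  "comp G1 G2 = (let k1 = ncols G1 in (k1 + ncols G2, \<lambda>u v.
     if fst u < k1 \<and> fst v < k1 then edg G1 u v
     else if k1 \<le> fst u \<and> k1 \<le> fst v then edg G2 (fst u - k1, snd u) (fst v - k1, snd v)
     else if snd u = snd v \<and> ((fst u = k1 - 1 \<and> fst v = k1) \<or> (fst u = k1 \<and> fst v = k1 - 1))
       then Some (Le, 0) else None))"

definition dot :: "'c tgraph \<Rightarrow> 'c tgraph \<Rightarrow> 'c tgraph" (infixl "\<cdot>" 70) where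
  "dot G1 G2 = short (G1 \<odot> G2)"

end

theory Submission
  imports Defs
begin

lemma strict_neq[simp]: "s \<noteq> Lt \<longleftrightarrow> s = Le" "s \<noteq> Le \<longleftrightarrow> s = Lt" "Lt \<noteq> s \<longleftrightarrow> s = Le" "Le \<noteq> s \<longleftrightarrow> s = Lt"
  by (cases s; simp)+

lemma wle_refl[simp]: "wle a a" by (simp add: wle_def)

lemma wle_trans: "wle a b \<Longrightarrow> wle b c \<Longrightarrow> wle a c"
  by (cases a; cases b; cases c) (auto simp: wle_def)

lemma wle_antisym: "wle a b \<Longrightarrow> wle b a \<Longrightarrow> a = b"
  by (cases a; cases b) (auto simp: wle_def)

lemma wle_total: "wle a b \<or> wle b a"
  by (cases a; cases b) (auto simp: wle_def)

lemma wadd_comm: "wadd a b = wadd b a"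
  by (cases a; cases b) auto

lemma wadd_assoc: "wadd (wadd a b) c = wadd a (wadd b c)"
  by (cases a; cases b; cases c) auto

lemma wadd_zero_right[simp]: "wadd a (Le, 0) = a"
  by (cases a) auto

lemma wadd_zero_left[simp]: "wadd (Le, 0) a = a"
  by (cases a) auto

lemma wadd_mono: "wle a b \<Longrightarrow> wle c d \<Longrightarrow> wle (wadd a c) (wadd b d)"
  by (cases a; cases b; cases c; cases d) (auto simp: wle_def)

lemma not_wneg: "\<not> wneg d \<longleftrightarrow> wle (Le, 0) d"
  by (cases d) (auto simp: wneg_def wle_def)


declare wadd.simps[simp del]

definition pathE :: "'c edges \<Rightarrow> 'c vertex \<Rightarrow> 'c vertex \<Rightarrow> weight \<Rightarrow> bool" where
  "pathE E u w d \<longleftrightarrow> (\<exists>vs. 2 \<le> length vs \<and> hd vs = u \<and> last vs = w \<and> pw E vs = Some d)"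

lemma is_path_pathE: "is_path G = pathE (edg G)"
  by (intro ext) (simp add: is_path_def pathE_def)

definition restr :: "'c edges \<Rightarrow> 'c vertex set \<Rightarrow> 'c edges" where
  "restr E S u v = (if u \<in> S \<and> v \<in> S then E u v else None)"

lemma pw_append:
  "pw E (xs @ [y]) = Some a \<Longrightarrow> pw E (y # zs) = Some b \<Longrightarrow> pw E (xs @ y # zs) = Some (wadd a b)"
proof (induction xs arbitrary: a)
  case Nil then show ?case by (auto dest: sym)
next
  case (Cons x xs)
  obtain v rest where vr: "xs @ [y] = v # rest" by (cases "xs @ [y]") auto
  from Cons.prems(1) vr obtain c a' where c: "E x v = Some c" and a': "pw E (xs @ [y]) = Some a'"
     and a: "a = wadd c a'"
    by (auto split: option.splits)
  have IH: "pw E (xs @ y # zs) = Some (wadd a' b)" using Cons.IH[OF a' Cons.prems(2)] .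
  obtain rest' where "xs @ y # zs = v # rest'" using vr by (cases xs) auto
  then show ?case using c IH a by (simp add: wadd_assoc)
qed

lemma pw_split:
  "pw E (xs @ y # zs) = Some d \<Longrightarrow> \<exists>a b. pw E (xs @ [y]) = Some a \<and> pw E (y # zs) = Some b \<and> d = wadd a b"
proof (induction xs arbitrary: d)
  case Nil then show ?case by simp
next
  case (Cons x xs)
  obtain v rest where vr: "xs @ y # zs = v # rest" by (cases "xs") auto
  from Cons.prems vr obtain c d' where c: "E x v = Some c" and d': "pw E (xs @ y # zs) = Some d'"
     and d: "d = wadd c d'"
    by (auto split: option.splits)
  from Cons.IH[OF d'] obtain a b where ab: "pw E (xs @ [y]) = Some a" "pw E (y # zs) = Some b" "d' = wadd a b"
    by blast
  obtain rest' where "xs @ [y] = v # rest'" using vr by (cases xs) auto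
  then show ?case using c ab d by (simp add: wadd_assoc)
qed

lemma pw_edge: "pw E vs \<noteq> None \<Longrightarrow> Suc i < length vs \<Longrightarrow> E (vs!i) (vs!Suc i) \<noteq> None"
proof (induction E vs arbitrary: i rule: pw.induct)
  case (3 E u v rest)
  show ?case
  proof (cases i)
    case 0 then show ?thesis using 3 by (auto split: option.splits)
  next
    case (Suc j) then show ?thesis using 3 by (auto split: option.splits)
  qed
qed auto

lemma pw_map:
  assumes "\<And>u v e. E1 u v = Some e \<Longrightarrow> E2 (f u) (f v) = Some e"
  shows "pw E1 vs = Some d \<Longrightarrow> pw E2 (map f vs) = Some d"
proof (induction vs arbitrary: d)
  case Nil then show ?case by simp
next
  case (Cons u vs)
  show ?case
  proof (cases vs)
    case Nil then show ?thesis using Cons by simp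
  next
    case (Cons v rest)
    from Cons.prems[unfolded Cons] obtain c d' where c: "E1 u v = Some c" and d': "pw E1 (v # rest) = Some d'"
       and d: "d = wadd c d'" by (auto split: option.splits)
    have "pw E2 (map f (v # rest)) = Some d'" using Cons.IH d' Cons by simp
    then show ?thesis using assms[OF c] d Cons by simp
  qed
qed

lemma pw_restr: "set vs \<subseteq> S \<Longrightarrow> pw (restr E S) vs = pw E vs"
  by (induction E vs rule: pw.induct) (auto simp: restr_def split: option.splits)

lemma pw_restr_set: "pw (restr E S) vs \<noteq> None \<Longrightarrow> 2 \<le> length vs \<Longrightarrow> set vs \<subseteq> S"
proof (induction E vs rule: pw.induct)
  case (3 E u v rest)
  then show ?case by (cases rest) (auto simp: restr_def split: option.splits if_splits)
qed auto


lemma pathE_edge: "E u v = Some e \<Longrightarrow> pathE E u v e"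
  unfolding pathE_def by (rule exI[of _ "[u,v]"]) simp

lemma pathE_trans: assumes "pathE E u v a" "pathE E v w b" shows "pathE E u w (wadd a b)"
proof -
  obtain vs1 where 1: "2 \<le> length vs1" "hd vs1 = u" "last vs1 = v" "pw E vs1 = Some a"
    using assms(1) unfolding pathE_def by blast
  obtain vs2 where 2: "2 \<le> length vs2" "hd vs2 = v" "last vs2 = w" "pw E vs2 = Some b"
    using assms(2) unfolding pathE_def by blast
  obtain xs where xs: "vs1 = xs @ [v]" using 1
    by (metis append_butlast_last_id list.size(3) not_numeral_le_zero)
  obtain zs where zs: "vs2 = v # zs" using 2 by (cases vs2) auto
  have "pw E (xs @ v # zs) = Some (wadd a b)" using pw_append 1 2 xs zs by metis
  moreover have "hd (xs @ v # zs) = u" using 1 xs by (cases xs) auto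
  moreover have "last (xs @ v # zs) = w" using 2 zs by (cases zs) auto
  moreover have "2 \<le> length (xs @ v # zs)" using 1 xs by simp
  ultimately show ?thesis unfolding pathE_def by blast
qed

lemma pathE_map:
  assumes "\<And>u v e. E1 u v = Some e \<Longrightarrow> E2 (f u) (f v) = Some e" "pathE E1 u w d"
  shows "pathE E2 (f u) (f w) d"
proof -
  obtain vs where 1: "2 \<le> length vs" "hd vs = u" "last vs = w" "pw E1 vs = Some d"
    using assms(2) unfolding pathE_def by blast
  have "pw E2 (map f vs) = Some d" using pw_map[of E1 E2 f vs d] assms(1) 1 by blast
  moreover have "vs \<noteq> []" using 1 by auto
  moreover have "hd (map f vs) = f u" "last (map f vs) = f w" "2 \<le> length (map f vs)"
    using 1 \<open>vs \<noteq> []\<close> by (auto simp: hd_map last_map)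
  ultimately show ?thesis unfolding pathE_def by blast
qed

lemma pathE_restr: "pathE (restr E S) u w d \<Longrightarrow> pathE E u w d"
proof -
  have "\<And>u v e. restr E S u v = Some e \<Longrightarrow> E (id u) (id v) = Some e"
    by (simp add: restr_def split: if_splits)
  then show "pathE (restr E S) u w d \<Longrightarrow> pathE E u w d" using pathE_map[of "restr E S" E id] by auto
qed

lemma pathE_restr_in: "pathE (restr E S) u w d \<Longrightarrow> u \<in> S \<and> w \<in> S"
  unfolding pathE_def using pw_restr_set
  by (metis hd_in_set last_in_set list.size(3) not_numeral_le_zero option.distinct(1) subsetD)

definition R :: "'c edges \<Rightarrow> 'c vertex \<Rightarrow> 'c vertex \<Rightarrow> weight \<Rightarrow> bool" where
  "R E u w d \<longleftrightarrow> (u = w \<and> wle (Le, 0) d) \<or> (\<exists>d'. pathE E u w d' \<and> wle d' d)"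

lemma R_trans: assumes "R E u v a" "R E v w b" shows "R E u w (wadd a b)"
proof -
  have A: "(u = v \<and> wle (Le,0) a) \<or> (\<exists>a'. pathE E u v a' \<and> wle a' a)" using assms(1) R_def by blast
  have B: "(v = w \<and> wle (Le,0) b) \<or> (\<exists>b'. pathE E v w b' \<and> wle b' b)" using assms(2) R_def by blast
  show ?thesis
  proof (cases "u = v \<and> wle (Le,0) a")
    case a1: True
    show ?thesis
    proof (cases "v = w \<and> wle (Le,0) b")
      case True
      then show ?thesis using a1 wadd_mono[of "(Le,0)" a "(Le,0)" b]
        unfolding R_def by auto
    next
      case False
      then obtain b' where b': "pathE E v w b'" "wle b' b" using B by blast
      have "wle b' (wadd a b)" using wadd_mono[of "(Le,0)" a b' b] a1 b' by simp
      then show ?thesis using a1 b' unfolding R_def by blast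
    qed
  next
    case False
    then obtain a' where a': "pathE E u v a'" "wle a' a" using A by blast
    show ?thesis
    proof (cases "v = w \<and> wle (Le,0) b")
      case True
      have "wle a' (wadd a b)" using wadd_mono[of a' a "(Le,0)" b] True a' by simp
      then show ?thesis using True a' unfolding R_def by blast
    next
      case False
      then obtain b' where b': "pathE E v w b'" "wle b' b" using B by blast
      show ?thesis using pathE_trans[OF a'(1) b'(1)] wadd_mono[OF a'(2) b'(2)] unfolding R_def by blast
    qed
  qed
qed

lemma pw_abstract:
  assumes edges: "\<And>u v e. E' u v = Some e \<Longrightarrow> \<exists>d. pathE E (f u) (f v) d \<and> wle d e"
  shows "pw E' vs = Some d \<Longrightarrow> 2 \<le> length vs \<Longrightarrow> \<exists>d'. pathE E (f (hd vs)) (f (last vs)) d' \<and> wle d' d"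
proof (induction vs arbitrary: d)
  case Nil then show ?case by simp
next
  case (Cons u vs)
  then obtain v rest where vs: "vs = v # rest" by (cases vs) auto
  from Cons.prems(1)[unfolded vs] obtain c d1 where c: "E' u v = Some c" and d1: "pw E' (v # rest) = Some d1"
     and d: "d = wadd c d1" by (auto split: option.splits)
  obtain e where e: "pathE E (f u) (f v) e" "wle e c" using edges[OF c] by blast
  show ?case
  proof (cases rest)
    case Nil
    then have "d1 = (Le,0)" using d1 by simp
    then have "d = c" using d by simp
    have "f (hd (u#vs)) = f u" "f (last (u#vs)) = f v" using vs Nil by auto
    then show ?thesis using e \<open>d = c\<close> by metis
  next
    case (Cons x xs)
    obtain e1 where e1: "pathE E (f v) (f (last vs)) e1" "wle e1 d1"
      using Cons.IH[of d1] d1 vs Cons by auto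
    have "last (u # vs) = last vs" using vs by simp
    then show ?thesis using pathE_trans[OF e(1) e1(1)] wadd_mono[OF e(2) e1(2)] d
      by (intro exI[where x="wadd e e1"]) simp
  qed
qed

lemma pathE_abstract:
  assumes "\<And>u v e. E' u v = Some e \<Longrightarrow> \<exists>d. pathE E (f u) (f v) d \<and> wle d e"
    "pathE E' p q d"
  shows "\<exists>d'. pathE E (f p) (f q) d' \<and> wle d' d"
  using assms(2) pw_abstract[of E' E f, OF assms(1)] unfolding pathE_def by blast


definition edges_in :: "'c edges \<Rightarrow> 'c vertex set \<Rightarrow> bool" where
  "edges_in E V \<longleftrightarrow> (\<forall>u v. E u v \<noteq> None \<longrightarrow> u \<in> V \<and> v \<in> V)"

definition nncE :: "'c edges \<Rightarrow> bool" where
  "nncE E \<longleftrightarrow> (\<forall>u d. pathE E u u d \<longrightarrow> wle (Le, 0) d)"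

lemma pw_set_V: assumes "edges_in E V" "pw E vs \<noteq> None" "2 \<le> length vs" shows "set vs \<subseteq> V"
proof -
  have "restr E V u v = E u v" for u v
  proof -
    have "E u v \<noteq> None \<longrightarrow> u \<in> V \<and> v \<in> V" using assms(1) unfolding edges_in_def by blast
    then show ?thesis unfolding restr_def by (cases "E u v") simp_all
  qed
  then have "restr E V = E" by (intro ext)
  then show ?thesis using pw_restr_set[of E V vs] assms by simp
qed

lemma shorten:
  assumes V: "finite V" "edges_in E V" and nnc: "nncE E"
  shows "pw E vs = Some d \<Longrightarrow> 2 \<le> length vs \<Longrightarrow>
    \<exists>ws d'. pw E ws = Some d' \<and> 2 \<le> length ws \<and> length ws \<le> card V + 1 \<and> set ws \<subseteq> V \<and>
       hd ws = hd vs \<and> last ws = last vs \<and> wle d' d"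
proof (induction "length vs" arbitrary: vs d rule: less_induct)
  case less
  have setV: "set vs \<subseteq> V" using pw_set_V[OF V(2)] less.prems by simp
  show ?case
  proof (cases "length vs \<le> card V + 1")
    case True then show ?thesis using less.prems setV by (intro exI[of _ vs] exI[of _ d]) simp
  next
    case False
    obtain bs l where vs: "vs = bs @ [l]" using less.prems
      by (metis append_butlast_last_id list.size(3) not_numeral_le_zero)
    have "set bs \<subseteq> V" using setV vs by auto
    then have "card (set bs) \<le> card V" using V(1) card_mono by blast
    moreover have "length bs > card V" using False vs by simp
    ultimately have "\<not> distinct bs" using distinct_card by (metis not_le)
    then obtain xs ys zs y where bs: "bs = xs @ [y] @ ys @ [y] @ zs" using not_distinct_decomp by blast
    have vs2: "vs = xs @ y # (ys @ y # (zs @ [l]))" using vs bs by simp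
    obtain a b0 where ab: "pw E (xs @ [y]) = Some a" "pw E (y # ys @ y # zs @ [l]) = Some b0" "d = wadd a b0"
      using pw_split[of E xs y "ys @ y # zs @ [l]" d] less.prems(1) vs2 by auto
    obtain c b where cb: "pw E ((y # ys) @ [y]) = Some c" "pw E (y # zs @ [l]) = Some b" "b0 = wadd c b"
      using pw_split[of E "y # ys" y "zs @ [l]" b0] ab(2) by auto
    have "pathE E y y c" unfolding pathE_def
      by (rule exI[of _ "(y # ys) @ [y]"]) (use cb(1) in simp)
    then have c0: "wle (Le,0) c" using nnc unfolding nncE_def by blast
    define ws where "ws = xs @ y # zs @ [l]"
    have pws: "pw E ws = Some (wadd a b)" unfolding ws_def using pw_append[OF ab(1) cb(2)] .
    have "wle (wadd a b) d"
      using wadd_mono[OF wle_refl[of a] wadd_mono[OF c0 wle_refl[of b]]] ab(3) cb(3) by simp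
    moreover have "length ws < length vs" "2 \<le> length ws" unfolding ws_def using vs2 by auto
    moreover have "hd ws = hd vs" "last ws = last vs" unfolding ws_def using vs2 by (cases xs; simp)+
    ultimately obtain ws' d' where W: "pw E ws' = Some d'" "2 \<le> length ws'" "length ws' \<le> card V + 1" "set ws' \<subseteq> V"
       "hd ws' = hd ws" "last ws' = last ws" "wle d' (wadd a b)"
      using less.hyps[of ws "wadd a b"] pws by blast
    have "wle d' d" using W(7) \<open>wle (wadd a b) d\<close> by (rule wle_trans)
    then show ?thesis using W \<open>hd ws = hd vs\<close> \<open>last ws = last vs\<close>
      by (intro exI[of _ ws'] exI[of _ d']) simp
  qed
qed

lemma finite_min: "finite W \<Longrightarrow> W \<noteq> {} \<Longrightarrow> \<exists>m\<in>W. \<forall>x\<in>W. wle m x"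
proof (induction W rule: finite_ne_induct)
  case (singleton x) then show ?case by simp
next
  case (insert x F)
  then obtain m where m: "m \<in> F" "\<forall>x\<in>F. wle m x" by blast
  show ?case
  proof (cases "wle x m")
    case True
    have "\<forall>y\<in>insert x F. wle x y"
    proof
      fix y assume "y \<in> insert x F"
      then show "wle x y" using True m wle_trans[of x m y] by auto
    qed
    then show ?thesis by blast
  next
    case False then have "wle m x" using wle_total by blast
    then have "\<forall>y\<in>insert x F. wle m y" using m by blast
    then show ?thesis using m(1) by blast
  qed
qed

definition hasmin :: "'c edges \<Rightarrow> 'c vertex \<Rightarrow> 'c vertex \<Rightarrow> weight \<Rightarrow> bool" where
  "hasmin E u w m \<longleftrightarrow> pathE E u w m \<and> (\<forall>d'. pathE E u w d' \<longrightarrow> wle m d')"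

lemma min_exists:
  assumes V: "finite V" "edges_in E V" and nnc: "nncE E" and p: "pathE E u w d"
  shows "\<exists>m. hasmin E u w m"
proof -
  define L where "L = {ws. set ws \<subseteq> V \<and> length ws \<le> card V + 1}"
  define W where "W = {d. \<exists>ws\<in>L. 2 \<le> length ws \<and> hd ws = u \<and> last ws = w \<and> pw E ws = Some d}"
  have "finite L" unfolding L_def using finite_lists_length_le[OF V(1)] by simp
  have "W \<subseteq> (\<lambda>ws. the (pw E ws)) ` L" unfolding W_def by force
  then have fW: "finite W" using \<open>finite L\<close> finite_subset finite_imageI by blast
  have short: "\<exists>d''\<in>W. wle d'' d'" if pd: "pathE E u w d'" for d'
  proof -
    obtain vs where vs: "2 \<le> length vs" "hd vs = u" "last vs = w" "pw E vs = Some d'"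
      using pd unfolding pathE_def by blast
    obtain ws d'' where "pw E ws = Some d''" "2 \<le> length ws" "length ws \<le> card V + 1" "set ws \<subseteq> V"
       "hd ws = hd vs" "last ws = last vs" "wle d'' d'"
      using shorten[OF V nnc vs(4) vs(1)] by blast
    then show ?thesis unfolding W_def L_def using vs by blast
  qed
  then have "W \<noteq> {}" using p by blast
  then obtain m where m: "m \<in> W" "\<forall>x\<in>W. wle m x" using finite_min fW by blast
  have "pathE E u w m" using m(1) unfolding W_def pathE_def by blast
  moreover have "\<forall>d'. pathE E u w d' \<longrightarrow> wle m d'"
  proof (intro allI impI)
    fix d' assume "pathE E u w d'"
    then obtain d'' where "d'' \<in> W" "wle d'' d'" using short by blast
    then show "wle m d'" using m(2) wle_trans[of m d'' d'] by blast
  qed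
  ultimately show ?thesis unfolding hasmin_def by blast
qed

lemma hasmin_unique: "hasmin E u w m \<Longrightarrow> hasmin E u w m' \<Longrightarrow> m = m'"
  unfolding hasmin_def using wle_antisym by blast

definition minE :: "'c edges \<Rightarrow> 'c vertex \<Rightarrow> 'c vertex \<Rightarrow> weight" where
  "minE E u w = (THE d. pathE E u w d \<and> (\<forall>d'. pathE E u w d' \<longrightarrow> wle d d'))"

lemma minE_eq: assumes h: "hasmin E u w m" shows "minE E u w = m"
  unfolding minE_def
proof (rule the_equality)
  show "pathE E u w m \<and> (\<forall>d'. pathE E u w d' \<longrightarrow> wle m d')" using h unfolding hasmin_def .
next
  fix d assume "pathE E u w d \<and> (\<forall>d'. pathE E u w d' \<longrightarrow> wle d d')"
  then have "hasmin E u w d" unfolding hasmin_def .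
  then show "d = m" using hasmin_unique h by blast
qed

lemma min_path_weight_minE: "min_path_weight G = minE (edg G)"
  by (intro ext) (simp add: min_path_weight_def minE_def is_path_pathE)


lemma pw_two: "pw E [u, v] = E u v"
  by (cases "E u v") auto

lemma decomp:
  assumes A1: "\<And>u v. E u v \<noteq> None \<Longrightarrow> \<not>(u \<in> S \<and> v \<in> S) \<Longrightarrow> u \<in> range \<phi> \<and> v \<in> range \<phi>"
    and A2: "\<And>p q. \<not>(\<phi> p \<in> S \<and> \<phi> q \<in> S) \<Longrightarrow> E' p q = E (\<phi> p) (\<phi> q)"
    and A3: "\<And>p q d. \<phi> p \<in> S \<Longrightarrow> \<phi> q \<in> S \<Longrightarrow> \<phi> p \<noteq> \<phi> q \<Longrightarrow> pathE (restr E S) (\<phi> p) (\<phi> q) d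
               \<Longrightarrow> \<exists>e. E' p q = Some e \<and> wle e d"
    and A4: "\<And>u d. pathE (restr E S) u u d \<Longrightarrow> wle (Le,0) d"
    and A5: "inj \<phi>"
  shows "pw E vs = Some d \<Longrightarrow> 2 \<le> length vs \<Longrightarrow> hd vs = \<phi> p \<Longrightarrow> last vs = \<phi> q \<Longrightarrow> R E' p q d"
proof (induction "length vs" arbitrary: vs d p q rule: less_induct)
  case less
  show ?case
  proof (cases "set vs \<subseteq> S")
    case True
    then have "pw (restr E S) vs = Some d" using pw_restr less.prems by metis
    then have pr: "pathE (restr E S) (\<phi> p) (\<phi> q) d" unfolding pathE_def using less.prems by blast
    have "\<phi> p \<in> S" "\<phi> q \<in> S" using pathE_restr_in[OF pr] by auto
    show ?thesis
    proof (cases "\<phi> p = \<phi> q")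
      case True
      then have "p = q" using A5 by (simp add: inj_eq)
      have "wle (Le,0) d" using A4[of "\<phi> p" d] pr True by simp
      then show ?thesis using \<open>p = q\<close> unfolding R_def by blast
    next
      case False
      obtain e where "E' p q = Some e" "wle e d" using A3[OF \<open>\<phi> p \<in> S\<close> \<open>\<phi> q \<in> S\<close> False pr] by blast
      then show ?thesis using pathE_edge[of E' p q e] unfolding R_def by blast
    qed
  next
    case notS: False
    show ?thesis
    proof (cases "\<exists>i. 0 < i \<and> i < length vs - 1 \<and> vs ! i \<in> range \<phi>")
      case True
      then obtain i m where i: "0 < i" "i < length vs - 1" "vs ! i = \<phi> m" by blast
      define xs where "xs = take i vs"
      define zs where "zs = drop (Suc i) vs"
      have vs: "vs = xs @ \<phi> m # zs" unfolding xs_def zs_def using i id_take_nth_drop[of i vs] by simp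
      obtain a b where ab: "pw E (xs @ [\<phi> m]) = Some a" "pw E (\<phi> m # zs) = Some b" "d = wadd a b"
        using pw_split[of E xs "\<phi> m" zs d] less.prems(1) vs by blast
      have lxs: "length xs = i" unfolding xs_def using i by simp
      have lzs: "length zs = length vs - Suc i" unfolding zs_def by simp
      have "xs \<noteq> []" using lxs i by auto
      have "zs \<noteq> []" using lzs i by auto
      have 1: "R E' p m a"
        apply (rule less.hyps[of "xs @ [\<phi> m]"])
        using lxs i ab vs less.prems \<open>xs \<noteq> []\<close> by auto
      have 2: "R E' m q b"
        apply (rule less.hyps[of "\<phi> m # zs"])
        using lzs i ab vs less.prems \<open>zs \<noteq> []\<close> by auto
      show ?thesis using R_trans[OF 1 2] ab(3) by simp
    next
      case noint: False
      have pne: "pw E vs \<noteq> None" using less.prems by simp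
      from notS obtain x where x: "x \<in> set vs" "x \<notin> S" by blast
      then obtain k where k: "k < length vs" "vs ! k \<notin> S" by (auto simp: in_set_conv_nth)
      have len2: "length vs = 2"
      proof (rule ccontr)
        assume "length vs \<noteq> 2"
        then have l3: "length vs \<ge> 3" using less.prems by simp
        show False
        proof (cases "Suc k < length vs")
          case True
          have "E (vs ! k) (vs ! Suc k) \<noteq> None" using pw_edge[OF pne True] .
          then have r: "vs ! k \<in> range \<phi> \<and> vs ! Suc k \<in> range \<phi>" using A1 k by blast
          show False
          proof (cases "k = 0")
            case True
            have "0 < Suc k \<and> Suc k < length vs - 1 \<and> vs ! Suc k \<in> range \<phi>" using r True l3 by simp
            then show False using noint by blast
          next
            case False
            have "0 < k \<and> k < length vs - 1 \<and> vs ! k \<in> range \<phi>" using r False True by simp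
            then show False using noint by blast
          qed
        next
          case False
          then have kl: "k = length vs - 1" using k by simp
          have "Suc (length vs - 2) < length vs" using l3 by simp
          then have "E (vs ! (length vs - 2)) (vs ! Suc (length vs - 2)) \<noteq> None" using pw_edge[OF pne] by blast
          moreover have "Suc (length vs - 2) = k" using kl l3 by simp
          ultimately have "vs ! (length vs - 2) \<in> range \<phi>" using A1[of "vs ! (length vs - 2)" "vs ! k"] k by simp
          moreover have "0 < length vs - 2 \<and> length vs - 2 < length vs - 1" using l3 by simp
          ultimately show False using noint by blast
        qed
      qed
      then obtain x y where vsxy: "vs = [x, y]" by (auto simp: length_Suc_conv numeral_2_eq_2)
      then have xy: "x = \<phi> p" "y = \<phi> q" using less.prems by auto
      have "\<not> (\<phi> p \<in> S \<and> \<phi> q \<in> S)" using notS vsxy xy by auto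
      moreover have "pw E [\<phi> p, \<phi> q] = Some d" using less.prems(1) vsxy xy by (simp only:)
      then have "E (\<phi> p) (\<phi> q) = Some d" by (simp only: pw_two)
      ultimately have "E' p q = Some d" using A2 by simp
      then show ?thesis using pathE_edge[of E' p q d] wle_refl unfolding R_def by blast
    qed
  qed
qed

locale sim =
  fixes E E' :: "'c edges" and S :: "'c vertex set" and \<phi> :: "'c vertex \<Rightarrow> 'c vertex"
  assumes A1: "\<And>u v. E u v \<noteq> None \<Longrightarrow> \<not>(u \<in> S \<and> v \<in> S) \<Longrightarrow> u \<in> range \<phi> \<and> v \<in> range \<phi>"
    and A2: "\<And>p q. \<not>(\<phi> p \<in> S \<and> \<phi> q \<in> S) \<Longrightarrow> E' p q = E (\<phi> p) (\<phi> q)"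
    and A3: "\<And>p q d. \<phi> p \<in> S \<Longrightarrow> \<phi> q \<in> S \<Longrightarrow> \<phi> p \<noteq> \<phi> q \<Longrightarrow> pathE (restr E S) (\<phi> p) (\<phi> q) d
               \<Longrightarrow> \<exists>e. E' p q = Some e \<and> wle e d"
    and A3': "\<And>p q e. \<phi> p \<in> S \<Longrightarrow> \<phi> q \<in> S \<Longrightarrow> E' p q = Some e
               \<Longrightarrow> \<exists>d. pathE (restr E S) (\<phi> p) (\<phi> q) d \<and> wle d e"
    and A4: "\<And>u d. pathE (restr E S) u u d \<Longrightarrow> wle (Le,0) d"
    and A5: "inj \<phi>"
begin

lemma edges_up: assumes e: "E' u v = Some e" shows "\<exists>d. pathE E (\<phi> u) (\<phi> v) d \<and> wle d e"
  proof (cases "\<phi> u \<in> S \<and> \<phi> v \<in> S")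
    case True
    then show ?thesis using A3'[of u v e] e pathE_restr by blast
  next
    case False
    then have "E (\<phi> u) (\<phi> v) = Some e" using A2 e by simp
    then show ?thesis using pathE_edge wle_refl by blast
  qed

lemma up: "pathE E' p q d \<Longrightarrow> \<exists>d'. pathE E (\<phi> p) (\<phi> q) d' \<and> wle d' d"
  using pathE_abstract[of E' E \<phi>, OF edges_up] by blast

lemma down: assumes "pathE E (\<phi> p) (\<phi> q) d" "p \<noteq> q"
  shows "\<exists>d'. pathE E' p q d' \<and> wle d' d"
proof -
  obtain vs where vs: "2 \<le> length vs" "hd vs = \<phi> p" "last vs = \<phi> q" "pw E vs = Some d"
    using assms(1) unfolding pathE_def by blast
  have "R E' p q d"
    by (rule decomp[where E=E and S=S and \<phi>=\<phi> and E'=E', OF A1 A2 A3 A4 A5 vs(4) vs(1) vs(2) vs(3)])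
  then show ?thesis using assms(2) unfolding R_def by blast
qed

lemma ex_iff: "p \<noteq> q \<Longrightarrow> (\<exists>d. pathE E' p q d) \<longleftrightarrow> (\<exists>d. pathE E (\<phi> p) (\<phi> q) d)"
  using up down by blast

lemma hasmin_down: assumes "hasmin E (\<phi> p) (\<phi> q) m" "p \<noteq> q" shows "hasmin E' p q m"
proof -
  have pm: "pathE E (\<phi> p) (\<phi> q) m" and mle: "\<And>d. pathE E (\<phi> p) (\<phi> q) d \<Longrightarrow> wle m d"
    using assms(1) unfolding hasmin_def by blast+
  obtain d' where d': "pathE E' p q d'" "wle d' m" using down[OF pm assms(2)] by blast
  have "\<forall>d. pathE E' p q d \<longrightarrow> wle m d"
  proof (intro allI impI)
    fix d assume "pathE E' p q d"
    then obtain d'' where "pathE E (\<phi> p) (\<phi> q) d''" "wle d'' d" using up by blast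
    then show "wle m d" using mle[of d''] wle_trans[of m d'' d] by blast
  qed
  moreover have "d' = m" using d'(2) \<open>\<forall>d. pathE E' p q d \<longrightarrow> wle m d\<close> d'(1) wle_antisym[of d' m] by blast
  ultimately show ?thesis using d' unfolding hasmin_def by blast
qed

lemma hasmin_up: assumes "hasmin E' p q m" "p \<noteq> q" shows "hasmin E (\<phi> p) (\<phi> q) m"
proof -
  have pm: "pathE E' p q m" and mle: "\<And>d. pathE E' p q d \<Longrightarrow> wle m d"
    using assms(1) unfolding hasmin_def by blast+
  obtain d' where d': "pathE E (\<phi> p) (\<phi> q) d'" "wle d' m" using up[OF pm] by blast
  have "\<forall>d. pathE E (\<phi> p) (\<phi> q) d \<longrightarrow> wle m d"
  proof (intro allI impI)
    fix d assume "pathE E (\<phi> p) (\<phi> q) d"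
    then obtain d'' where "pathE E' p q d''" "wle d'' d" using down assms(2) by blast
    then show "wle m d" using mle[of d''] wle_trans[of m d'' d] by blast
  qed
  moreover have "d' = m" using d'(2) \<open>\<forall>d. pathE E (\<phi> p) (\<phi> q) d \<longrightarrow> wle m d\<close> d'(1) wle_antisym[of d' m] by blast
  ultimately show ?thesis using d' unfolding hasmin_def by blast
qed

lemma nnc_down: "nncE E \<Longrightarrow> nncE E'"
  unfolding nncE_def
proof (intro allI impI)
  fix u d assume nn: "\<forall>u d. pathE E u u d \<longrightarrow> wle (Le, 0) d" and "pathE E' u u d"
  then obtain d' where "pathE E (\<phi> u) (\<phi> u) d'" "wle d' d" using up by blast
  then show "wle (Le, 0) d" using nn wle_trans[of "(Le,0)" d' d] by blast
qed

end


lemma edg_canon: "edg (canon G) u w = (if u \<noteq> w \<and> (\<exists>d. pathE (edg G) u w d) then Some (minE (edg G) u w) else None)"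
  by (simp add: canon_def edg_def is_path_pathE min_path_weight_minE)

lemma ncols_canon[simp]: "ncols (canon G) = ncols G"
  by (simp add: canon_def ncols_def)

lemma tgraph_edges_in: "tgraph G \<Longrightarrow> edges_in (edg G) ({..<ncols G} \<times> UNIV)"
  unfolding tgraph_def edges_in_def by (auto simp: mem_Times_iff)

lemma finite_cols: "finite ({..<(n::nat)} \<times> (UNIV :: ('c::finite) set))"
  by (intro finite_cartesian_product finite_lessThan finite_class.finite_UNIV)

lemma nnc_iff: "no_neg_cycle G \<longleftrightarrow> nncE (edg G)"
  unfolding no_neg_cycle_def nncE_def is_path_pathE not_wneg ..

lemma tgraph_hasmin:
  assumes "tgraph (G :: ('c::finite) tgraph)" "no_neg_cycle G" "pathE (edg G) u w d"
  shows "\<exists>m. hasmin (edg G) u w m"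
  using min_exists[OF finite_cols tgraph_edges_in[OF assms(1)]] assms(2,3) nnc_iff by blast

lemma short_eq:
  fixes H H' :: "('c::finite) tgraph"
  assumes sim: "sim (edg H) (edg H') S \<phi>" and tg: "tgraph H" "tgraph H'"
    and nnc: "no_neg_cycle H \<or> no_neg_cycle H'"
    and phi0: "\<And>x. \<phi> (0,x) = (0,x)" and phi1: "\<And>x. \<phi> (ncols H' - 1, x) = (ncols H - 1, x)"
  shows "short H = short H'"
proof -
  interpret sim "edg H" "edg H'" S \<phi> by (rule sim)
  have key: "edg (canon H) (\<phi> p) (\<phi> q) = edg (canon H') p q" for p q
  proof (cases "p = q")
    case True then show ?thesis by (simp add: edg_canon)
  next
    case False
    then have ne: "\<phi> p \<noteq> \<phi> q" using A5 by (simp add: inj_eq)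
    show ?thesis
    proof (cases "\<exists>d. pathE (edg H') p q d")
      case True
      then obtain d where d: "pathE (edg H') p q d" by blast
      obtain d1 where d1: "pathE (edg H) (\<phi> p) (\<phi> q) d1" using up[OF d] by blast
      obtain m where "hasmin (edg H) (\<phi> p) (\<phi> q) m \<and> hasmin (edg H') p q m"
      proof (cases "no_neg_cycle H")
        case True
        then obtain m where m: "hasmin (edg H) (\<phi> p) (\<phi> q) m" using tgraph_hasmin[OF tg(1) True d1] by blast
        then show ?thesis using hasmin_down[OF m False] that by blast
      next
        case False
        then have nn: "no_neg_cycle H'" using nnc by blast
        obtain m where m: "hasmin (edg H') p q m" using tgraph_hasmin[OF tg(2) nn d] by blast
        then show ?thesis using hasmin_up[OF m \<open>p \<noteq> q\<close>] that by blast
      qed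
      then have m1: "minE (edg H) (\<phi> p) (\<phi> q) = m" and m2: "minE (edg H') p q = m" using minE_eq by blast+
      have e1: "\<exists>d. pathE (edg H) (\<phi> p) (\<phi> q) d" using d1 by blast
      show ?thesis using ne False True e1 m1 m2 by (simp add: edg_canon)
    next
      case nop: False
      then have "\<not> (\<exists>d. pathE (edg H) (\<phi> p) (\<phi> q) d)" using ex_iff[OF False] by blast
      then show ?thesis using nop by (simp add: edg_canon)
    qed
  qed
  have r: "(case u of (j, x) \<Rightarrow> (if j = 0 then 0 else ncols H - 1, x)) =
      \<phi> (case u of (j, x) \<Rightarrow> (if j = 0 then 0 else ncols H' - 1, x))" for u :: "'c vertex"
    by (cases u) (auto simp: phi0 phi1 phi1[simplified])
  show ?thesis unfolding short_def Let_def
    by (simp only: r key)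
qed


lemma ncols_comp[simp]: "ncols (A \<odot> B) = ncols A + ncols B"
  by (simp add: comp_def Let_def ncols_def)

lemma edg_comp: "edg (A \<odot> B) u v = (if fst u < ncols A \<and> fst v < ncols A then edg A u v
     else if ncols A \<le> fst u \<and> ncols A \<le> fst v then edg B (fst u - ncols A, snd u) (fst v - ncols A, snd v)
     else if snd u = snd v \<and> ((fst u = ncols A - 1 \<and> fst v = ncols A) \<or> (fst u = ncols A \<and> fst v = ncols A - 1))
       then Some (Le, 0) else None)"
  by (simp add: comp_def Let_def ncols_def edg_def)

lemma ncols_short[simp]: "ncols (short G) = 2"
  by (simp add: short_def ncols_def)

lemma edg_short: "edg (short G) u w = (if fst u \<le> 1 \<and> fst w \<le> 1 then
    edg (canon G) (if fst u = 0 then 0 else ncols G - 1, snd u) (if fst w = 0 then 0 else ncols G - 1, snd w) else None)"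
  by (cases u; cases w) (simp add: short_def edg_def Let_def)

lemma tg_edge: "tgraph G \<Longrightarrow> edg G u v \<noteq> None \<Longrightarrow> fst u < ncols G \<and> fst v < ncols G"
  unfolding tgraph_def by blast

lemma tgraph_comp: assumes "tgraph A" "tgraph B" shows "tgraph (A \<odot> B)"
proof -
  have k: "2 \<le> ncols A" "2 \<le> ncols B" using assms unfolding tgraph_def by auto
  have "fst u < ncols (A \<odot> B) \<and> fst v < ncols (A \<odot> B)" if h: "edg (A \<odot> B) u v \<noteq> None" for u v
    using h k tg_edge[OF assms(1), of u v] tg_edge[OF assms(2), of "(fst u - ncols A, snd u)" "(fst v - ncols A, snd v)"]
    by (auto simp: edg_comp split: if_splits)
  then show ?thesis using k unfolding tgraph_def by auto
qed

lemma tgraph_short: "tgraph (short G)"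
proof -
  have "fst u < ncols (short G) \<and> fst v < ncols (short G)" if h: "edg (short G) u v \<noteq> None" for u v
    using h by (simp add: edg_short split: if_splits)
  then show ?thesis unfolding tgraph_def by auto
qed

lemma tgraph_None: "tgraph G \<Longrightarrow> \<not> (fst u < ncols G \<and> fst v < ncols G) \<Longrightarrow> edg G u v = None"
  unfolding tgraph_def by blast

definition phiL :: "nat \<Rightarrow> 'c vertex \<Rightarrow> 'c vertex" where
  "phiL k u = (if fst u = 0 then 0 else fst u + k - 2, snd u)"

lemma range_phiL: "2 \<le> k \<Longrightarrow> u \<in> range (phiL k) \<longleftrightarrow> fst u = 0 \<or> k - 1 \<le> fst u"
proof
  assume "2 \<le> k" "u \<in> range (phiL k)"
  then show "fst u = 0 \<or> k - 1 \<le> fst u" by (auto simp: phiL_def split: if_splits)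
next
  assume k: "2 \<le> k" and h: "fst u = 0 \<or> k - 1 \<le> fst u"
  show "u \<in> range (phiL k)"
  proof (cases "fst u = 0")
    case True
    then have "phiL k u = u" by (simp add: phiL_def prod_eq_iff)
    then show ?thesis by (metis rangeI)
  next
    case False
    then have "phiL k (fst u + 2 - k, snd u) = u" using h k by (auto simp: phiL_def)
    then show ?thesis by (metis rangeI)
  qed
qed

lemma inj_phiL: "2 \<le> k \<Longrightarrow> inj (phiL k)"
  unfolding inj_def phiL_def by (auto simp: prod_eq_iff split: if_splits)

lemma restr_left: "tgraph A \<Longrightarrow> restr (edg (A \<odot> B)) {u. fst u < ncols A} = edg A"
  by (intro ext) (auto simp: restr_def edg_comp tgraph_None)


lemma fst_phiL[simp]: "fst (phiL k p) = (if fst p = 0 then 0 else fst p + k - 2)"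
  "snd (phiL k p) = snd p"
  by (simp_all add: phiL_def)

lemma left_cols: "2 \<le> k \<Longrightarrow> fst (phiL k p) < k \<longleftrightarrow> fst p \<le> 1"
  by auto

lemma edg_comp_cross: assumes "\<not> (fst u < ncols A \<and> fst v < ncols A)" "\<not> (ncols A \<le> fst u \<and> ncols A \<le> fst v)"
  shows "edg (A \<odot> B) u v = (if snd u = snd v \<and> ((fst u = ncols A - 1 \<and> fst v = ncols A) \<or> (fst u = ncols A \<and> fst v = ncols A - 1))
       then Some (Le, 0) else None)"
  by (subst edg_comp) (simp only: assms if_False)

lemma left_A2:
  assumes k: "2 \<le> ncols A" and h: "\<not> (fst p \<le> 1 \<and> fst q \<le> 1)"
  shows "edg (short A \<odot> B) p q = edg (A \<odot> B) (phiL (ncols A) p) (phiL (ncols A) q)"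
proof (cases "2 \<le> fst p \<and> 2 \<le> fst q")
  case True
  then have "ncols A \<le> fst p + ncols A - 2" "ncols A \<le> fst q + ncols A - 2"
    "fst p + ncols A - 2 - ncols A = fst p - 2" "fst q + ncols A - 2 - ncols A = fst q - 2"
    "fst p \<noteq> 0" "fst q \<noteq> 0" using k by auto
  then show ?thesis using True k by (simp add: edg_comp)
next
  case False
  let ?k = "ncols A"
  have c1: "\<not> (fst p < ncols (short A) \<and> fst q < ncols (short A))" "\<not> (ncols (short A) \<le> fst p \<and> ncols (short A) \<le> fst q)"
    using h False by auto
  have c2: "\<not> (fst (phiL ?k p) < ?k \<and> fst (phiL ?k q) < ?k)" "\<not> (?k \<le> fst (phiL ?k p) \<and> ?k \<le> fst (phiL ?k q))"
    using h False k by auto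
  have eq: "((fst (phiL ?k p) = ?k - 1 \<and> fst (phiL ?k q) = ?k) \<or> (fst (phiL ?k p) = ?k \<and> fst (phiL ?k q) = ?k - 1))
      \<longleftrightarrow> ((fst p = 2 - 1 \<and> fst q = 2) \<or> (fst p = 2 \<and> fst q = 2 - 1))"
    using h False k by auto
  show ?thesis using edg_comp_cross[OF c1, of B] edg_comp_cross[OF c2, of B] eq by simp
qed

lemma left_A1:
  assumes k: "2 \<le> ncols A" and e: "edg (A \<odot> B) u v \<noteq> None" and h: "\<not> (fst u < ncols A \<and> fst v < ncols A)"
  shows "u \<in> range (phiL (ncols A)) \<and> v \<in> range (phiL (ncols A))"
proof -
  have "ncols A - 1 \<le> fst u \<and> ncols A - 1 \<le> fst v"
  proof (cases "ncols A \<le> fst u \<and> ncols A \<le> fst v")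
    case True then show ?thesis by auto
  next
    case False
    show ?thesis using e edg_comp_cross[OF h False, of B] by (auto split: if_splits)
  qed
  then show ?thesis using range_phiL[OF k] by blast
qed

lemma phiL_low: "fst p \<le> 1 \<Longrightarrow> phiL k p = (if fst p = 0 then 0 else k - 1, snd p)"
  by (auto simp: phiL_def)

lemma left_short_edge:
  assumes "fst p \<le> 1" "fst q \<le> 1"
  shows "edg (short A \<odot> B) p q = edg (canon A) (phiL (ncols A) p) (phiL (ncols A) q)"
  using assms by (simp add: edg_comp edg_short phiL_low)


lemma sim_left:
  fixes A B :: "('c::finite) tgraph"
  assumes tA: "tgraph A" and tB: "tgraph B" and nA: "no_neg_cycle A"
  shows "sim (edg (A \<odot> B)) (edg (short A \<odot> B)) {u. fst u < ncols A} (phiL (ncols A))"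
proof
  have k: "2 \<le> ncols A" using tA tgraph_def by blast
  show "u \<in> range (phiL (ncols A)) \<and> v \<in> range (phiL (ncols A))"
    if "edg (A \<odot> B) u v \<noteq> None" "\<not> (u \<in> {u. fst u < ncols A} \<and> v \<in> {u. fst u < ncols A})" for u v
    using left_A1[OF k that(1)] that(2) by simp
  show "edg (short A \<odot> B) p q = edg (A \<odot> B) (phiL (ncols A) p) (phiL (ncols A) q)"
    if "\<not> (phiL (ncols A) p \<in> {u. fst u < ncols A} \<and> phiL (ncols A) q \<in> {u. fst u < ncols A})" for p q
  proof -
    have "\<not> (fst p \<le> 1 \<and> fst q \<le> 1)" using that left_cols[OF k, of p] left_cols[OF k, of q] by blast+
    then show ?thesis by (rule left_A2[OF k])
  qed
  show "\<exists>e. edg (short A \<odot> B) p q = Some e \<and> wle e d"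
    if "phiL (ncols A) p \<in> {u. fst u < ncols A}" "phiL (ncols A) q \<in> {u. fst u < ncols A}"
      "phiL (ncols A) p \<noteq> phiL (ncols A) q"
      "pathE (restr (edg (A \<odot> B)) {u. fst u < ncols A}) (phiL (ncols A) p) (phiL (ncols A) q) d" for p q d
  proof -
    have pd: "pathE (edg A) (phiL (ncols A) p) (phiL (ncols A) q) d" using that(4) restr_left[OF tA] by simp
    have pq: "fst p \<le> 1" "fst q \<le> 1" using that(1,2) left_cols[OF k, of p] left_cols[OF k, of q] by blast+
    have e: "edg (short A \<odot> B) p q = edg (canon A) (phiL (ncols A) p) (phiL (ncols A) q)"
      using left_short_edge[OF pq] .
    obtain m where m: "hasmin (edg A) (phiL (ncols A) p) (phiL (ncols A) q) m"
      using tgraph_hasmin[OF tA nA pd] by blast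
    have ex: "\<exists>d. pathE (edg A) (phiL (ncols A) p) (phiL (ncols A) q) d" using pd by blast
    have "edg (canon A) (phiL (ncols A) p) (phiL (ncols A) q) = Some m"
      using minE_eq[OF m] ex that(3) by (simp add: edg_canon)
    moreover have "wle m d" using m pd unfolding hasmin_def by blast
    ultimately show ?thesis using e by simp
  qed
  show "\<exists>d. pathE (restr (edg (A \<odot> B)) {u. fst u < ncols A}) (phiL (ncols A) p) (phiL (ncols A) q) d \<and> wle d e"
    if "phiL (ncols A) p \<in> {u. fst u < ncols A}" "phiL (ncols A) q \<in> {u. fst u < ncols A}"
      "edg (short A \<odot> B) p q = Some e" for p q e
  proof -
    have pq: "fst p \<le> 1" "fst q \<le> 1" using that(1,2) left_cols[OF k, of p] left_cols[OF k, of q] by blast+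
    have e: "edg (short A \<odot> B) p q = edg (canon A) (phiL (ncols A) p) (phiL (ncols A) q)"
      using left_short_edge[OF pq] .
    then have ce: "edg (canon A) (phiL (ncols A) p) (phiL (ncols A) q) = Some e" using that(3) by simp
    then obtain d where pd: "pathE (edg A) (phiL (ncols A) p) (phiL (ncols A) q) d"
      by (auto simp: edg_canon split: if_splits)
    obtain m where m: "hasmin (edg A) (phiL (ncols A) p) (phiL (ncols A) q) m"
      using tgraph_hasmin[OF tA nA pd] by blast
    have "e = m" using ce minE_eq[OF m] by (auto simp: edg_canon split: if_splits)
    moreover have "pathE (edg A) (phiL (ncols A) p) (phiL (ncols A) q) m" using m unfolding hasmin_def by blast
    ultimately show ?thesis using restr_left[OF tA] by (intro exI[of _ m]) simp
  qed
  show "wle (Le, 0) d" if "pathE (restr (edg (A \<odot> B)) {u. fst u < ncols A}) u u d" for u d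
  proof -
    have "pathE (edg A) u u d" using that restr_left[OF tA, of B] by simp
    then show ?thesis using nA[unfolded nnc_iff nncE_def] by blast
  qed
  show "inj (phiL (ncols A))" using inj_phiL k by blast
qed


lemma left_eq:
  fixes A B :: "('c::finite) tgraph"
  assumes tA: "tgraph A" and tB: "tgraph B" and nA: "no_neg_cycle A"
    and nn: "no_neg_cycle (A \<odot> B) \<or> no_neg_cycle (short A \<odot> B)"
  shows "short (A \<odot> B) = short (short A \<odot> B)"
proof -
  have k: "2 \<le> ncols A" "2 \<le> ncols B" using tA tB tgraph_def by blast+
  show ?thesis
  proof (rule short_eq[OF sim_left[OF tA tB nA] tgraph_comp[OF tA tB] tgraph_comp[OF tgraph_short tB] nn])
    show "phiL (ncols A) (0, x) = (0, x)" for x by (simp add: phiL_def)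
    show "phiL (ncols A) (ncols (short A \<odot> B) - 1, x) = (ncols (A \<odot> B) - 1, x)" for x
      using k by (simp add: phiL_def)
  qed
qed

lemma left_nnc:
  fixes A B :: "('c::finite) tgraph"
  assumes tA: "tgraph A" and tB: "tgraph B" and nA: "no_neg_cycle A" and nn: "no_neg_cycle (A \<odot> B)"
  shows "no_neg_cycle (short A \<odot> B)"
proof -
  interpret sim "edg (A \<odot> B)" "edg (short A \<odot> B)" "{u. fst u < ncols A}" "phiL (ncols A)"
    by (rule sim_left[OF tA tB nA])
  show ?thesis using nnc_down nn nnc_iff by blast
qed

lemma pathE_first_edge: "pathE E u w d \<Longrightarrow> \<exists>v. E u v \<noteq> None"
proof -
  assume "pathE E u w d"
  then obtain vs where vs: "2 \<le> length vs" "hd vs = u" "pw E vs = Some d" unfolding pathE_def by blast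
  then have "E (vs ! 0) (vs ! Suc 0) \<noteq> None" using pw_edge[of E vs 0] by simp
  moreover have "vs ! 0 = u" using vs by (cases vs) auto
  ultimately show ?thesis by blast
qed

lemma pathE_last_edge: "pathE E u w d \<Longrightarrow> \<exists>v. E v w \<noteq> None"
proof -
  assume "pathE E u w d"
  then obtain vs where vs: "2 \<le> length vs" "last vs = w" "pw E vs = Some d" unfolding pathE_def by blast
  have "Suc (length vs - 2) < length vs" using vs by simp
  then have "E (vs ! (length vs - 2)) (vs ! Suc (length vs - 2)) \<noteq> None" using pw_edge[of E vs] vs by simp
  moreover have "Suc (length vs - 2) = length vs - 1" using vs by arith
  then have "vs ! Suc (length vs - 2) = w" using vs last_conv_nth[of vs] by (cases vs) auto
  ultimately show ?thesis by metis
qed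

definition phiR :: "nat \<Rightarrow> nat \<Rightarrow> 'c vertex \<Rightarrow> 'c vertex" where
  "phiR k1 k2 u = (if fst u < k1 then fst u else if fst u = k1 then k1 else fst u + k2 - 2, snd u)"

lemma fst_phiR[simp]: "fst (phiR k1 k2 u) = (if fst u < k1 then fst u else if fst u = k1 then k1 else fst u + k2 - 2)"
  "snd (phiR k1 k2 u) = snd u"
  by (simp_all add: phiR_def)

lemma inj_phiR: "2 \<le> k2 \<Longrightarrow> inj (phiR k1 k2)"
  unfolding inj_def phiR_def by (auto simp: prod_eq_iff split: if_splits)

lemma range_phiR: assumes "2 \<le> k2" "fst u < k1 \<or> fst u = k1 \<or> k1 + k2 - 1 \<le> fst u"
  shows "u \<in> range (phiR k1 k2)"
proof -
  consider "fst u < k1" | "fst u = k1" | "k1 + k2 - 1 \<le> fst u" "\<not> fst u < k1" "fst u \<noteq> k1" using assms(2) by blast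
  then show ?thesis
  proof cases
    case 1 then have "phiR k1 k2 u = u" by (simp add: phiR_def prod_eq_iff)
    then show ?thesis by (metis rangeI)
  next
    case 2 then have "phiR k1 k2 u = u" by (simp add: phiR_def prod_eq_iff)
    then show ?thesis by (metis rangeI)
  next
    case 3
    then have "k1 < fst u + 2 - k2" using assms(1) by arith
    then have "phiR k1 k2 (fst u + 2 - k2, snd u) = u" using 3 assms(1) by (simp add: phiR_def prod_eq_iff)
    then show ?thesis by (metis rangeI)
  qed
qed

definition shB :: "nat \<Rightarrow> 'c vertex \<Rightarrow> 'c vertex" where
  "shB k u = (fst u - k, snd u)"

definition unsh :: "nat \<Rightarrow> 'c vertex \<Rightarrow> 'c vertex" where
  "unsh k u = (fst u + k, snd u)"

lemma restr_right_path:
  assumes "pathE (restr (edg (A \<odot> B)) {u. ncols A \<le> fst u}) u w d"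
  shows "pathE (edg B) (shB (ncols A) u) (shB (ncols A) w) d"
proof (rule pathE_map[OF _ assms])
  fix x y e assume "restr (edg (A \<odot> B)) {u. ncols A \<le> fst u} x y = Some e"
  then show "edg B (shB (ncols A) x) (shB (ncols A) y) = Some e"
    by (simp add: restr_def edg_comp shB_def split: if_splits)
qed

lemma B_restr_path:
  assumes tB: "tgraph B" and "pathE (edg B) x y d"
  shows "pathE (restr (edg (A \<odot> B)) {u. ncols A \<le> fst u}) (unsh (ncols A) x) (unsh (ncols A) y) d"
proof (rule pathE_map[OF _ assms(2)])
  fix u v e assume "edg B u v = Some e"
  then show "restr (edg (A \<odot> B)) {u. ncols A \<le> fst u} (unsh (ncols A) u) (unsh (ncols A) v) = Some e"
    by (simp add: restr_def edg_comp unsh_def)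
qed

lemma unsh_shB: "k \<le> fst u \<Longrightarrow> unsh k (shB k u) = u"
  by (simp add: unsh_def shB_def prod_eq_iff)


lemma right_cols: "2 \<le> k2 \<Longrightarrow> k1 \<le> fst (phiR k1 k2 p) \<longleftrightarrow> k1 \<le> fst p"
  by auto

lemma right_A2:
  assumes k: "2 \<le> ncols B" and h: "\<not> (ncols A \<le> fst p \<and> ncols A \<le> fst q)"
  shows "edg (A \<odot> short B) p q = edg (A \<odot> B) (phiR (ncols A) (ncols B) p) (phiR (ncols A) (ncols B) q)"
proof (cases "fst p < ncols A \<and> fst q < ncols A")
  case True
  then have "phiR (ncols A) (ncols B) p = p" "phiR (ncols A) (ncols B) q = q" by (simp_all add: phiR_def prod_eq_iff)
  then show ?thesis using True by (simp add: edg_comp)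
next
  case False
  let ?f = "phiR (ncols A) (ncols B)"
  have c1: "\<not> (fst p < ncols A \<and> fst q < ncols A)" "\<not> (ncols A \<le> fst p \<and> ncols A \<le> fst q)"
    using h False by auto
  have c2: "\<not> (fst (?f p) < ncols A \<and> fst (?f q) < ncols A)" "\<not> (ncols A \<le> fst (?f p) \<and> ncols A \<le> fst (?f q))"
    using h False k by auto
  have eq: "((fst (?f p) = ncols A - 1 \<and> fst (?f q) = ncols A) \<or> (fst (?f p) = ncols A \<and> fst (?f q) = ncols A - 1))
      \<longleftrightarrow> ((fst p = ncols A - 1 \<and> fst q = ncols A) \<or> (fst p = ncols A \<and> fst q = ncols A - 1))"
    using h False k by auto
  show ?thesis using edg_comp_cross[OF c1, of "short B"] edg_comp_cross[OF c2, of B] eq by simp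
qed

lemma right_A1:
  assumes k: "2 \<le> ncols B" and e: "edg (A \<odot> B) u v \<noteq> None" and h: "\<not> (ncols A \<le> fst u \<and> ncols A \<le> fst v)"
  shows "u \<in> range (phiR (ncols A) (ncols B)) \<and> v \<in> range (phiR (ncols A) (ncols B))"
proof -
  have "fst u \<le> ncols A \<and> fst v \<le> ncols A"
  proof (cases "fst u < ncols A \<and> fst v < ncols A")
    case True then show ?thesis by auto
  next
    case False
    show ?thesis using e edg_comp_cross[OF False h, of B] by (auto split: if_splits)
  qed
  then show ?thesis using range_phiR[OF k] by (metis le_neq_implies_less)
qed

lemma right_short_edge:
  assumes "ncols A \<le> fst p" "fst p \<le> ncols A + 1" "ncols A \<le> fst q" "fst q \<le> ncols A + 1"
  shows "edg (A \<odot> short B) p q = edg (canon B) (shB (ncols A) (phiR (ncols A) (ncols B) p)) (shB (ncols A) (phiR (ncols A) (ncols B) q))"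
proof -
  have a: "(if fst p - ncols A = 0 then 0 else ncols B - 1, snd p) = shB (ncols A) (phiR (ncols A) (ncols B) p)"
    using assms by (auto simp: shB_def phiR_def)
  have b: "(if fst q - ncols A = 0 then 0 else ncols B - 1, snd q) = shB (ncols A) (phiR (ncols A) (ncols B) q)"
    using assms by (auto simp: shB_def phiR_def)
  have "edg (A \<odot> short B) p q = edg (short B) (fst p - ncols A, snd p) (fst q - ncols A, snd q)"
    using assms by (simp add: edg_comp)
  also have "\<dots> = edg (canon B) (if fst p - ncols A = 0 then 0 else ncols B - 1, snd p) (if fst q - ncols A = 0 then 0 else ncols B - 1, snd q)"
  proof -
    have "fst p - ncols A \<le> 1" "fst q - ncols A \<le> 1" using assms by arith+
    then show ?thesis by (simp add: edg_short)
  qed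
  finally show ?thesis using a b by simp
qed

lemma right_bound:
  assumes tB: "tgraph B" and k: "2 \<le> ncols B" and p: "ncols A \<le> fst p"
    and e: "edg B (shB (ncols A) (phiR (ncols A) (ncols B) p)) v \<noteq> None"
  shows "fst p \<le> ncols A + 1"
proof -
  have "fst (shB (ncols A) (phiR (ncols A) (ncols B) p)) < ncols B" using tg_edge[OF tB e] by simp
  then show ?thesis using p k by (auto simp: shB_def split: if_splits)
qed

lemma right_bound2:
  assumes tB: "tgraph B" and k: "2 \<le> ncols B" and p: "ncols A \<le> fst p"
    and e: "edg B v (shB (ncols A) (phiR (ncols A) (ncols B) p)) \<noteq> None"
  shows "fst p \<le> ncols A + 1"
proof -
  have "fst (shB (ncols A) (phiR (ncols A) (ncols B) p)) < ncols B" using tg_edge[OF tB e] by simp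
  then show ?thesis using p k by (auto simp: shB_def split: if_splits)
qed


lemma shB_inj_S: "k \<le> fst u \<Longrightarrow> k \<le> fst v \<Longrightarrow> shB k u = shB k v \<Longrightarrow> u = v"
  by (metis unsh_shB)

lemma sim_right:
  fixes A B :: "('c::finite) tgraph"
  assumes tA: "tgraph A" and tB: "tgraph B" and nB: "no_neg_cycle B"
  shows "sim (edg (A \<odot> B)) (edg (A \<odot> short B)) {u. ncols A \<le> fst u} (phiR (ncols A) (ncols B))"
proof
  have k: "2 \<le> ncols B" using tB tgraph_def by blast
  let ?f = "phiR (ncols A) (ncols B)"
  let ?S = "{u. ncols A \<le> fst u}"
  show "u \<in> range ?f \<and> v \<in> range ?f"
    if "edg (A \<odot> B) u v \<noteq> None" "\<not> (u \<in> ?S \<and> v \<in> ?S)" for u v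
    using right_A1[OF k that(1)] that(2) by simp
  show "edg (A \<odot> short B) p q = edg (A \<odot> B) (?f p) (?f q)"
    if "\<not> (?f p \<in> ?S \<and> ?f q \<in> ?S)" for p q
  proof -
    have "\<not> (ncols A \<le> fst p \<and> ncols A \<le> fst q)" using that right_cols[OF k, of "ncols A" p] right_cols[OF k, of "ncols A" q] by blast
    then show ?thesis by (rule right_A2[OF k])
  qed
  show "\<exists>e. edg (A \<odot> short B) p q = Some e \<and> wle e d"
    if "?f p \<in> ?S" "?f q \<in> ?S" "?f p \<noteq> ?f q" "pathE (restr (edg (A \<odot> B)) ?S) (?f p) (?f q) d" for p q d
  proof -
    have pq: "ncols A \<le> fst p" "ncols A \<le> fst q"
      using that(1,2) right_cols[OF k, of "ncols A" p] right_cols[OF k, of "ncols A" q] by blast+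
    have pB: "pathE (edg B) (shB (ncols A) (?f p)) (shB (ncols A) (?f q)) d"
      using restr_right_path[OF that(4)] .
    obtain v1 where "edg B (shB (ncols A) (?f p)) v1 \<noteq> None" using pathE_first_edge[OF pB] by blast
    then have b1: "fst p \<le> ncols A + 1" using right_bound[OF tB k pq(1)] by blast
    obtain v2 where "edg B v2 (shB (ncols A) (?f q)) \<noteq> None" using pathE_last_edge[OF pB] by blast
    then have b2: "fst q \<le> ncols A + 1" using right_bound2[OF tB k pq(2)] by blast
    have e: "edg (A \<odot> short B) p q = edg (canon B) (shB (ncols A) (?f p)) (shB (ncols A) (?f q))"
      using right_short_edge[OF pq(1) b1 pq(2) b2] .
    have ne: "shB (ncols A) (?f p) \<noteq> shB (ncols A) (?f q)"
      using shB_inj_S that(1,2,3) by blast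
    obtain m where m: "hasmin (edg B) (shB (ncols A) (?f p)) (shB (ncols A) (?f q)) m"
      using tgraph_hasmin[OF tB nB pB] by blast
    have ex: "\<exists>d. pathE (edg B) (shB (ncols A) (?f p)) (shB (ncols A) (?f q)) d" using pB by blast
    have "edg (canon B) (shB (ncols A) (?f p)) (shB (ncols A) (?f q)) = Some m"
      using minE_eq[OF m] ex ne by (simp add: edg_canon)
    moreover have "wle m d" using m pB unfolding hasmin_def by blast
    ultimately show ?thesis using e by simp
  qed
  show "\<exists>d. pathE (restr (edg (A \<odot> B)) ?S) (?f p) (?f q) d \<and> wle d e"
    if "?f p \<in> ?S" "?f q \<in> ?S" "edg (A \<odot> short B) p q = Some e" for p q e
  proof -
    have pq: "ncols A \<le> fst p" "ncols A \<le> fst q"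
      using that(1,2) right_cols[OF k, of "ncols A" p] right_cols[OF k, of "ncols A" q] by blast+
    have "edg (short B) (fst p - ncols A, snd p) (fst q - ncols A, snd q) = Some e"
      using that(3) pq by (simp add: edg_comp)
    then have "fst p - ncols A \<le> 1" "fst q - ncols A \<le> 1" by (simp_all add: edg_short split: if_splits)
    then have b: "fst p \<le> ncols A + 1" "fst q \<le> ncols A + 1" by arith+
    have ce: "edg (canon B) (shB (ncols A) (?f p)) (shB (ncols A) (?f q)) = Some e"
      using right_short_edge[OF pq(1) b(1) pq(2) b(2)] that(3) by simp
    then obtain d where pd: "pathE (edg B) (shB (ncols A) (?f p)) (shB (ncols A) (?f q)) d"
      by (auto simp: edg_canon split: if_splits)
    obtain m where m: "hasmin (edg B) (shB (ncols A) (?f p)) (shB (ncols A) (?f q)) m"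
      using tgraph_hasmin[OF tB nB pd] by blast
    have "e = m" using ce minE_eq[OF m] by (auto simp: edg_canon split: if_splits)
    have "pathE (edg B) (shB (ncols A) (?f p)) (shB (ncols A) (?f q)) m" using m unfolding hasmin_def by blast
    then have "pathE (restr (edg (A \<odot> B)) ?S) (unsh (ncols A) (shB (ncols A) (?f p))) (unsh (ncols A) (shB (ncols A) (?f q))) m"
      using B_restr_path[OF tB] by blast
    moreover have "unsh (ncols A) (shB (ncols A) (?f p)) = ?f p" "unsh (ncols A) (shB (ncols A) (?f q)) = ?f q"
      using unsh_shB[of "ncols A" "?f p"] unsh_shB[of "ncols A" "?f q"] that(1,2) by simp_all
    ultimately have "pathE (restr (edg (A \<odot> B)) ?S) (?f p) (?f q) m" by simp
    then show ?thesis using \<open>e = m\<close> by (intro exI[of _ m]) simp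
  qed
  show "wle (Le, 0) d" if "pathE (restr (edg (A \<odot> B)) ?S) u u d" for u d
  proof -
    have "pathE (edg B) (shB (ncols A) u) (shB (ncols A) u) d" using restr_right_path[OF that] .
    then show ?thesis using nB[unfolded nnc_iff nncE_def] by blast
  qed
  show "inj ?f" using inj_phiR k by blast
qed

lemma right_eq:
  fixes A B :: "('c::finite) tgraph"
  assumes tA: "tgraph A" and tB: "tgraph B" and nB: "no_neg_cycle B"
    and nn: "no_neg_cycle (A \<odot> B) \<or> no_neg_cycle (A \<odot> short B)"
  shows "short (A \<odot> B) = short (A \<odot> short B)"
proof -
  have k: "2 \<le> ncols A" "2 \<le> ncols B" using tA tB tgraph_def by blast+
  show ?thesis
  proof (rule short_eq[OF sim_right[OF tA tB nB] tgraph_comp[OF tA tB] tgraph_comp[OF tA tgraph_short] nn])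
    show "phiR (ncols A) (ncols B) (0, x) = (0, x)" for x using k by (simp add: phiR_def)
    show "phiR (ncols A) (ncols B) (ncols (A \<odot> short B) - 1, x) = (ncols (A \<odot> B) - 1, x)" for x
      using k by (simp add: phiR_def)
  qed
qed


lemma tgraph_eqI: "ncols X = ncols Y \<Longrightarrow> edg X = edg Y \<Longrightarrow> X = Y"
  by (simp add: ncols_def edg_def prod_eq_iff)

lemma tgraph_ncols: "tgraph G \<Longrightarrow> 2 \<le> ncols G"
  by (simp add: tgraph_def)

lemma ec1: "fst u < ncols A \<Longrightarrow> fst v < ncols A \<Longrightarrow> edg (A \<odot> B) u v = edg A u v"
  by (simp add: edg_comp)

lemma ec2: "ncols A \<le> fst u \<Longrightarrow> ncols A \<le> fst v \<Longrightarrow>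
   edg (A \<odot> B) u v = edg B (fst u - ncols A, snd u) (fst v - ncols A, snd v)"
  by (simp add: edg_comp)

lemma ec3: "fst u < ncols A \<Longrightarrow> ncols A \<le> fst v \<Longrightarrow>
   edg (A \<odot> B) u v = (if snd u = snd v \<and> fst u = ncols A - 1 \<and> fst v = ncols A then Some (Le, 0) else None)"
  by (simp add: edg_comp)

lemma ec4: "ncols A \<le> fst u \<Longrightarrow> fst v < ncols A \<Longrightarrow>
   edg (A \<odot> B) u v = (if snd u = snd v \<and> fst u = ncols A \<and> fst v = ncols A - 1 then Some (Le, 0) else None)"
  by (simp add: edg_comp)

lemma comp_assoc:
  assumes a: "1 \<le> ncols A" and b: "1 \<le> ncols B"
  shows "(A \<odot> B) \<odot> C = A \<odot> (B \<odot> C)"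
proof (rule tgraph_eqI)
  show "ncols (A \<odot> B \<odot> C) = ncols (A \<odot> (B \<odot> C))" by simp
  show "edg (A \<odot> B \<odot> C) = edg (A \<odot> (B \<odot> C))"
  proof (intro ext)
    fix u v :: "'a vertex"
    let ?a = "ncols A" and ?K = "ncols A + ncols B"
    have r: "fst u < ?a \<or> (?a \<le> fst u \<and> fst u < ?K) \<or> ?K \<le> fst u" 
            "fst v < ?a \<or> (?a \<le> fst v \<and> fst v < ?K) \<or> ?K \<le> fst v" by auto
    show "edg (A \<odot> B \<odot> C) u v = edg (A \<odot> (B \<odot> C)) u v"
      using r
    proof (elim disjE conjE)
      assume "fst u < ?a" "fst v < ?a" then show ?thesis by (simp add: ec1)
    next
      assume "fst u < ?a" "?a \<le> fst v" "fst v < ?K" then show ?thesis by (simp add: ec1 ec3)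
    next
      assume "fst u < ?a" "?K \<le> fst v" then show ?thesis using a b by (simp add: ec1 ec3) arith
    next
      assume "?a \<le> fst u" "fst u < ?K" "fst v < ?a" then show ?thesis by (simp add: ec1 ec4)
    next
      assume "?a \<le> fst u" "fst u < ?K" "?a \<le> fst v" "fst v < ?K" then show ?thesis by (simp add: ec1 ec2)
    next
      assume "?a \<le> fst u" "fst u < ?K" "?K \<le> fst v" then show ?thesis using a b by (simp add: ec2 ec3; arith)
    next
      assume "?K \<le> fst u" "fst v < ?a" then show ?thesis using a b by (simp add: ec1 ec4) arith
    next
      assume "?K \<le> fst u" "?a \<le> fst v" "fst v < ?K" then show ?thesis using a b by (simp add: ec2 ec4; arith)
    next
      assume "?K \<le> fst u" "?K \<le> fst v" then show ?thesis by (simp add: ec2 diff_diff_left)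
    qed
  qed
qed

theorem mainTheorem12:
  shows "(\<forall>G1 G2 :: ('c::finite) tgraph.
            tgraph G1 \<and> tgraph G2 \<and> no_neg_cycle G1 \<and> no_neg_cycle G2 \<and> no_neg_cycle (G1 \<odot> G2)
            \<longrightarrow> G1 \<cdot> G2 = short G1 \<cdot> short G2)
       \<and> (\<forall>G1 G2 G3 :: ('c::finite) tgraph.
            tgraph G1 \<and> tgraph G2 \<and> tgraph G3 \<and>
            no_neg_cycle G1 \<and> no_neg_cycle G2 \<and> no_neg_cycle G3 \<and>
            no_neg_cycle (G1 \<odot> G2) \<and> no_neg_cycle (G2 \<odot> G3) \<and>
            no_neg_cycle ((G1 \<cdot> G2) \<odot> G3) \<and> no_neg_cycle (G1 \<odot> (G2 \<cdot> G3))
            \<longrightarrow> (G1 \<cdot> G2) \<cdot> G3 = G1 \<cdot> (G2 \<cdot> G3))"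
proof (intro conjI allI impI)
  fix G1 G2 :: "'c tgraph"
  assume h: "tgraph G1 \<and> tgraph G2 \<and> no_neg_cycle G1 \<and> no_neg_cycle G2 \<and> no_neg_cycle (G1 \<odot> G2)"
  then have t1: "tgraph G1" and t2: "tgraph G2" and n1: "no_neg_cycle G1" and n2: "no_neg_cycle G2"
    and n12: "no_neg_cycle (G1 \<odot> G2)" by auto
  have "G1 \<cdot> G2 = short (short G1 \<odot> G2)"
    unfolding dot_def using left_eq[OF t1 t2 n1] n12 by blast
  also have "\<dots> = short (short G1 \<odot> short G2)"
    using right_eq[OF tgraph_short t2 n2] left_nnc[OF t1 t2 n1 n12] by blast
  finally show "G1 \<cdot> G2 = short G1 \<cdot> short G2" unfolding dot_def .
next
  fix G1 G2 G3 :: "'c tgraph"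
  assume h: "tgraph G1 \<and> tgraph G2 \<and> tgraph G3 \<and>
            no_neg_cycle G1 \<and> no_neg_cycle G2 \<and> no_neg_cycle G3 \<and>
            no_neg_cycle (G1 \<odot> G2) \<and> no_neg_cycle (G2 \<odot> G3) \<and>
            no_neg_cycle ((G1 \<cdot> G2) \<odot> G3) \<and> no_neg_cycle (G1 \<odot> (G2 \<cdot> G3))"
  then have t1: "tgraph G1" and t2: "tgraph G2" and t3: "tgraph G3"
    and n12: "no_neg_cycle (G1 \<odot> G2)" and n23: "no_neg_cycle (G2 \<odot> G3)"
    and na: "no_neg_cycle (short (G1 \<odot> G2) \<odot> G3)" and nb: "no_neg_cycle (G1 \<odot> short (G2 \<odot> G3))"
    unfolding dot_def by auto
  have "(G1 \<cdot> G2) \<cdot> G3 = short ((G1 \<odot> G2) \<odot> G3)"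
    unfolding dot_def using left_eq[OF tgraph_comp[OF t1 t2] t3 n12] na by simp
  also have "\<dots> = short (G1 \<odot> (G2 \<odot> G3))"
  proof -
    have "1 \<le> ncols G1" "1 \<le> ncols G2" using tgraph_ncols[OF t1] tgraph_ncols[OF t2] by auto
    then show ?thesis using comp_assoc[of G1 G2 G3] by simp
  qed
  also have "\<dots> = G1 \<cdot> (G2 \<cdot> G3)"
    unfolding dot_def using right_eq[OF t1 tgraph_comp[OF t2 t3] n23] nb by simp
  finally show "(G1 \<cdot> G2) \<cdot> G3 = G1 \<cdot> (G2 \<cdot> G3)" .
qed


end
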